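(* Let $m\ge1$ and let $p\ge 2m-1$ be a prime. Let $0\le k\le\lfloor\frac{m+1}{2}\rfloor+1$ and let $n$ be a non-negative integer with $n<N_k$. Then $$\mathrm{ex}(n,m,p)\ge \nu_p(n!)-(k-1).$$
   Context: Partitions $\lambda=(\lambda_1\ge\dots\ge\lambda_r\ge0)$ may have zero parts; the degree sequence is $n_\lambda=(\lambda_r,\lambda_{r-1}+1,\dots,\lambda_1+r-1)=(n_{\lambda,1},\dots,n_{\lambda,r})$ and $\Delta(n_\lambda)=\prod_{i<j}(n_{\lambda,j}-n_{\lambda,i})$. $H(\lambda)=n_{\lambda,1}!\cdots n_{\lambda,r}!/\Delta(n_\lambda)$ (the product of hook lengths) and $F_\lambda=|\lambda|!/H(\lambda)$ is the dimension of the irreducible representation of the symmetric group $S_{|\lambda|}$ indexed by $\lambda$. $\nu_p$ is the $p$-adic valuation. Removing a $2$-hook means replacing an entry $a$ of $n_\lambda$ by $a-2\ge0$ with $a-2\notin n_\lambda$; removing $2$-hooks until impossible yields the $2$-core, a staircase $(m',m'-1,\dots,1)$ padded with zeros, of size $\binom{m'+1}2$. Define $\mathrm{ex}(n,m,p)=\min\{\nu_p(F_\lambda):\lambda\vdash n,\ \lambda\text{ has }2\text{-core of size }\binom{m+1}{2}\}$ (the minimum over the empty set is $+\infty$). For $0\le k\le\lfloor\frac{m+1}2\rfloor$ put $N_k=kp-k(2(m-k)+1)+\binom{m+1}{2}$, and put $N_{\lfloor\frac{m+1}2\rfloor+1}=(\lfloor\frac{m+1}2\rfloor+1)p$. *)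

theory Defs
  imports Complex_Main "HOL-Computational_Algebra.Primes" "HOL-Library.Extended_Real"
begin

(* A partition lambda = (lambda_1 >= ... >= lambda_r >= 0), zero parts allowed,
   represented as a list [lambda_1, ..., lambda_r]. *)
definition is_partition :: "nat list \<Rightarrow> bool" where
  "is_partition lam \<longleftrightarrow> sorted_wrt (\<ge>) lam"

(* Degree sequence n_lambda = (lambda_r, lambda_{r-1}+1, ..., lambda_1+r-1),
   0-indexed: deg lam j = lambda_{r-j} + j  for j < r. *)
definition deg :: "nat list \<Rightarrow> nat \<Rightarrow> nat" where
  "deg lam j = lam ! (length lam - 1 - j) + j"

definition Delta :: "nat list \<Rightarrow> int" where
  "Delta lam = (\<Prod>j<length lam. \<Prod>i<j. (int (deg lam j) - int (deg lam i)))"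

definition H :: "nat list \<Rightarrow> rat" where
  "H lam = of_int (\<Prod>j<length lam. fact (deg lam j)) / of_int (Delta lam)"

definition F :: "nat list \<Rightarrow> rat" where
  "F lam = fact (sum_list lam) / H lam"

(* the (integer) value of F_lambda, which is a positive integer *)
definition F_nat :: "nat list \<Rightarrow> nat" where
  "F_nat lam = nat \<lfloor>F lam\<rfloor>"

definition beta_set :: "nat list \<Rightarrow> nat set" where
  "beta_set lam = (\<lambda>j. deg lam j) ` {..<length lam}"

definition remove_2hook :: "nat set \<Rightarrow> nat set \<Rightarrow> bool" where
  "remove_2hook S T \<longleftrightarrow>
     (\<exists>a\<in>S. a \<ge> 2 \<and> a - 2 \<notin> S \<and> T = insert (a - 2) (S - {a}))"

(* size of the partition whose degree sequence has entry set S *)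
definition beta_size :: "nat set \<Rightarrow> nat" where
  "beta_size S = \<Sum>S - (card S choose 2)"

definition has_2core_size :: "nat list \<Rightarrow> nat \<Rightarrow> bool" where
  "has_2core_size lam c \<longleftrightarrow>
     (\<exists>T. remove_2hook\<^sup>*\<^sup>* (beta_set lam) T \<and> (\<nexists>U. remove_2hook T U) \<and> beta_size T = c)"

(* ex(n,m,p) = min { nu_p(F_lambda) : lambda |- n, 2-core of size binom(m+1,2) },
   +infinity for the empty set *)
definition ex :: "nat \<Rightarrow> nat \<Rightarrow> nat \<Rightarrow> ereal" where
  "ex n m p = Inf {ereal (real (multiplicity p (F_nat lam))) | lam.
       is_partition lam \<and> sum_list lam = n \<and> has_2core_size lam (Suc m choose 2)}"

definition NN :: "nat \<Rightarrow> nat \<Rightarrow> nat \<Rightarrow> int" where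
  "NN m p k =
     (if k \<le> (m + 1) div 2
      then int k * int p - int k * (2 * (int m - int k) + 1) + int (Suc m choose 2)
      else if k = (m + 1) div 2 + 1 then int k * int p else 0)"

end

theory Submission
  imports Defs
begin

definition gaps :: "nat set \<Rightarrow> nat \<Rightarrow> nat" where
  "gaps Q q = card {y. y < q \<and> y \<notin> Q}"

definition wt :: "nat set \<Rightarrow> nat" where
  "wt Q = (\<Sum>q\<in>Q. gaps Q q)"

lemma choose2_Suc: "Suc a choose 2 = (a choose 2) + a"
  by (simp add: numeral_2_eq_2 add.commute)

lemma below_count:
  fixes Q :: "nat set"
  assumes "finite Q"
  shows "(\<Sum>q\<in>Q. card {y\<in>Q. y < q}) = card Q choose 2"
  using assms
proof (induct Q rule: finite_linorder_max_induct)
  case empty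
  then show ?case by simp
next
  case (insert b A)
  have bA: "b \<notin> A" using insert by auto
  have "(\<Sum>q\<in>insert b A. card {y\<in>insert b A. y < q}) =
        card {y\<in>insert b A. y < b} + (\<Sum>q\<in>A. card {y\<in>insert b A. y < q})"
    using insert bA by simp
  also have "{y\<in>insert b A. y < b} = A" using insert by auto
  also have "(\<Sum>q\<in>A. card {y\<in>insert b A. y < q}) = (\<Sum>q\<in>A. card {y\<in>A. y < q})"
  proof (rule sum.cong)
    fix q assume "q \<in> A"
    then have "{y\<in>insert b A. y < q} = {y\<in>A. y < q}" using insert by auto
    then show "card {y\<in>insert b A. y < q} = card {y\<in>A. y < q}" by simp
  qed simp
  finally show ?case using insert bA by (simp add: choose2_Suc)
qed

lemma q_split:
  assumes "finite Q"
  shows "q = card {y\<in>Q. y < q} + gaps Q q"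
proof -
  have "{..<q} = {y\<in>Q. y < q} \<union> {y. y < q \<and> y \<notin> Q}" by auto
  moreover have "{y\<in>Q. y < q} \<inter> {y. y < q \<and> y \<notin> Q} = {}" by auto
  ultimately have "card {..<q} = card {y\<in>Q. y < q} + card {y. y < q \<and> y \<notin> Q}"
    by (metis (no_types, lifting) card_Un_disjoint finite_Un finite_lessThan)
  then show ?thesis by (simp add: gaps_def)
qed

lemma HC:
  assumes "finite Q"
  shows "\<Sum>Q = (card Q choose 2) + wt Q"
proof -
  have "\<Sum>Q = (\<Sum>q\<in>Q. card {y\<in>Q. y < q} + gaps Q q)"
    using q_split[OF assms] by (intro sum.cong) auto
  also have "\<dots> = (card Q choose 2) + wt Q"
    by (simp add: sum.distrib below_count[OF assms] wt_def)
  finally show ?thesis .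
qed

lemma wt_insert_max:
  assumes "finite A" "\<forall>a\<in>A. a < b"
  shows "int (wt (insert b A)) = int (wt A) + int b - int (card A)" "card A \<le> b"
proof -
  have bA: "b \<notin> A" using assms by auto
  have "A \<subseteq> {..<b}" using assms by auto
  then show cb: "card A \<le> b" using card_mono[of "{..<b}" A] by simp
  have "\<Sum>(insert b A) = b + \<Sum>A" using assms bA by simp
  then have "(card (insert b A) choose 2) + wt (insert b A) = b + (card A choose 2) + wt A"
    using HC[OF assms(1)] HC[of "insert b A"] assms by simp
  then have "(card A choose 2) + card A + wt (insert b A) = b + (card A choose 2) + wt A"
    using assms bA by (simp add: choose2_Suc)
  then show "int (wt (insert b A)) = int (wt A) + int b - int (card A)" by linarith
qed

lemma wt_lessThan: "wt {..<a} = 0"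
  unfolding wt_def gaps_def by simp

lemma alt_lemma:
  assumes "finite Q"
  shows "\<bar>(\<Sum>q\<in>Q. (-1::int)^q) - (\<Sum>q<card Q. (-1::int)^q)\<bar> \<le> 2 * int (wt Q)"
  using assms
proof (induct Q rule: finite_linorder_max_induct)
  case empty
  then show ?case by (simp add: wt_def)
next
  case (insert b A)
  have bA: "b \<notin> A" using insert by auto
  note w = wt_insert_max[OF insert(1) insert(2)]
  have e1: "(\<Sum>q\<in>insert b A. (-1::int)^q) = (-1)^b + (\<Sum>q\<in>A. (-1::int)^q)"
    using insert bA by simp
  have e2: "(\<Sum>q<card (insert b A). (-1::int)^q) = (\<Sum>q<card A. (-1::int)^q) + (-1)^(card A)"
    using insert bA by simp
  have "\<bar>(-1::int)^b - (-1)^(card A)\<bar> \<le> 2 * (int b - int (card A))"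
  proof (cases "b = card A")
    case True then show ?thesis by simp
  next
    case False
    then have "int b - int (card A) \<ge> 1" using w(2) by linarith
    moreover have "\<bar>(-1::int)^b - (-1)^(card A)\<bar> \<le> 2"
      by (cases "even b"; cases "even (card A)") auto
    ultimately show ?thesis by (smt (verit))
  qed
  then show ?case using insert(3) e1 e2 w(1) by (smt (verit))
qed



definition run :: "nat \<Rightarrow> nat set \<Rightarrow> nat \<Rightarrow> nat set" where
  "run p X i = {q. i + p*q \<in> X}"

lemma finite_run: assumes "p > 0" "finite X" shows "finite (run p X i)"
proof -
  have "inj (\<lambda>q. i + p*q)" using assms(1) by (auto simp: inj_def)
  then have "finite ((\<lambda>q. i + p*q) -` X)" using assms(2) by (simp add: finite_vimageI)
  moreover have "run p X i = (\<lambda>q. i + p*q) -` X" by (auto simp: run_def)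
  ultimately show ?thesis by simp
qed

lemma run_bij:
  assumes "p > 0"
  shows "bij_betw (\<lambda>(i,q). i + p*q) (Sigma {..<p} (run p X)) X"
  apply (rule bij_betw_byWitness[where f' = "\<lambda>x. (x mod p, x div p)"])
  using assms by (auto simp: run_def add.commute)

lemma sum_run:
  fixes f :: "nat \<Rightarrow> 'a::comm_monoid_add"
  assumes "p > 0" "finite X"
  shows "(\<Sum>x\<in>X. f x) = (\<Sum>i<p. \<Sum>q\<in>run p X i. f (i + p*q))"
proof -
  have "(\<Sum>i<p. \<Sum>q\<in>run p X i. f (i + p*q)) = (\<Sum>(i,q)\<in>Sigma {..<p} (run p X). f (i + p*q))"
    using finite_run[OF assms] by (subst sum.Sigma) auto
  also have "\<dots> = (\<Sum>x\<in>X. f x)"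
    using sum.reindex_bij_betw[OF run_bij[OF assms(1)], of f]
    by (simp add: case_prod_unfold)
  finally show ?thesis by simp
qed

definition PP :: "nat \<Rightarrow> nat set \<Rightarrow> nat" where
  "PP p X = (\<Sum>i<p. wt (run p X i))"

definition core0 :: "nat \<Rightarrow> nat set \<Rightarrow> nat set" where
  "core0 p X = {x. x div p < card (run p X (x mod p))}"

lemma run_core0: assumes "p > 0" "i < p" shows "run p (core0 p X) i = {..<card (run p X i)}"
  using assms by (auto simp: run_def core0_def)

lemma finite_core0: assumes "p > 0" "finite X" shows "finite (core0 p X)"
proof -
  let ?r = "\<Sum>i<p. card (run p X i)"
  have "core0 p X \<subseteq> {..<p * ?r + p}"
  proof
    fix x assume "x \<in> core0 p X"
    then have a: "x div p < card (run p X (x mod p))" by (simp add: core0_def)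
    have "x mod p < p" using assms by simp
    then have "card (run p X (x mod p)) \<le> ?r"
      by (intro member_le_sum) auto
    then have "x div p < ?r" using a by linarith
    then have "p * (x div p) + x mod p < p * ?r + p"
      using \<open>x mod p < p\<close> assms
      by (metis add_less_mono less_eq_nat.simps(1) mult_less_cancel1 not_less_eq
          linorder_not_less nat_mult_less_cancel_disj)
    then show "x \<in> {..<p * ?r + p}" by simp
  qed
  then show ?thesis by (rule finite_subset) simp
qed

lemma card_run: assumes "p > 0" "finite X" shows "card X = (\<Sum>i<p. card (run p X i))"
  using sum_run[OF assms, of "\<lambda>_. (1::nat)"] by simp

lemma sum_decomp:
  assumes "p > 0" "finite X"
  shows "\<Sum>X = (\<Sum>i<p. i * card (run p X i) + p * ((card (run p X i) choose 2) + wt (run p X i)))"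
proof -
  have "\<Sum>X = (\<Sum>i<p. \<Sum>q\<in>run p X i. i + p*q)" using sum_run[OF assms, of "\<lambda>x. x"] by simp
  also have "\<dots> = (\<Sum>i<p. i * card (run p X i) + p * \<Sum>(run p X i))"
    by (simp add: sum.distrib sum_distrib_left mult.commute)
  also have "\<dots> = (\<Sum>i<p. i * card (run p X i) + p * ((card (run p X i) choose 2) + wt (run p X i)))"
    using HC finite_run[OF assms] by simp
  finally show ?thesis .
qed

lemma wt_decomp:
  assumes "p > 0" "finite X"
  shows "wt X = wt (core0 p X) + p * PP p X" "card (core0 p X) = card X"
proof -
  have fc: "finite (core0 p X)" using finite_core0[OF assms] .
  have rc: "\<And>i. i < p \<Longrightarrow> card (run p (core0 p X) i) = card (run p X i)"
    "\<And>i. i < p \<Longrightarrow> wt (run p (core0 p X) i) = 0"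
    using run_core0[OF assms(1)] wt_lessThan by auto
  show cc: "card (core0 p X) = card X"
    using card_run[OF assms(1) fc] card_run[OF assms] rc by simp
  have s0: "\<Sum>(core0 p X) = (\<Sum>i<p. i * card (run p X i) + p * (card (run p X i) choose 2))"
    using sum_decomp[OF assms(1) fc] rc by simp
  have s1: "\<Sum>X = (\<Sum>i<p. i * card (run p X i) + p * (card (run p X i) choose 2)) + p * PP p X"
    unfolding sum_decomp[OF assms] PP_def by (simp add: sum.distrib sum_distrib_left algebra_simps)
  show "wt X = wt (core0 p X) + p * PP p X"
    using HC[OF assms(2)] HC[OF fc] s0 s1 cc by simp
qed

definition dd :: "nat set \<Rightarrow> int" where
  "dd X = (\<Sum>x\<in>X. (-1::int)^x)"

lemma dd_odd:
  assumes "odd p" "finite X"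
  shows "dd X = (\<Sum>i<p. (-1)^i * (\<Sum>q\<in>run p X i. (-1::int)^q))"
proof -
  have p0: "p > 0" using assms by presburger
  have "dd X = (\<Sum>i<p. \<Sum>q\<in>run p X i. (-1::int)^(i + p*q))"
    unfolding dd_def using sum_run[OF p0 assms(2)] by blast
  also have "\<dots> = (\<Sum>i<p. (-1)^i * (\<Sum>q\<in>run p X i. (-1::int)^q))"
    using assms(1) by (simp add: power_add power_mult sum_distrib_left)
  finally show ?thesis .
qed

lemma dd_change:
  assumes "odd p" "finite X"
  shows "\<bar>dd X - dd (core0 p X)\<bar> \<le> 2 * int (PP p X)"
proof -
  have p0: "p > 0" using assms by presburger
  have fc: "finite (core0 p X)" using finite_core0[OF p0 assms(2)] .
  have "dd X - dd (core0 p X) = (\<Sum>i<p. (-1)^i * ((\<Sum>q\<in>run p X i. (-1::int)^q) - (\<Sum>q<card (run p X i). (-1::int)^q)))"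
    unfolding dd_odd[OF assms] dd_odd[OF assms(1) fc]
    by (simp add: run_core0[OF p0] sum_subtractf[symmetric] right_diff_distrib)
  also have "\<bar>\<dots>\<bar> \<le> (\<Sum>i<p. \<bar>(-1)^i * ((\<Sum>q\<in>run p X i. (-1::int)^q) - (\<Sum>q<card (run p X i). (-1::int)^q))\<bar>)"
    by (rule sum_abs)
  also have "\<dots> \<le> (\<Sum>i<p. 2 * int (wt (run p X i)))"
    by (intro sum_mono) (simp add: abs_mult alt_lemma[OF finite_run[OF p0 assms(2)]])
  also have "\<dots> = 2 * int (PP p X)" by (simp add: PP_def sum_distrib_left)
  finally show ?thesis .
qed

lemma two_core:
  assumes "finite Y"
  shows "2 * int (wt (core0 2 Y)) = dd Y * (dd Y - 1)" "wt Y = wt (core0 2 Y) + 2 * PP 2 Y"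
proof -
  have p0: "(2::nat) > 0" by simp
  have fc: "finite (core0 2 Y)" using finite_core0[OF p0 assms] .
  show "wt Y = wt (core0 2 Y) + 2 * PP 2 Y" using wt_decomp[OF p0 assms] by simp
  let ?a = "card (run 2 Y 0)" and ?b = "card (run 2 Y 1)"
  have rc: "card (run 2 (core0 2 Y) 0) = ?a" "card (run 2 (core0 2 Y) 1) = ?b"
     "wt (run 2 (core0 2 Y) 0) = 0" "wt (run 2 (core0 2 Y) 1) = 0"
    using run_core0[OF p0, of _ Y] wt_lessThan by auto
  have s0: "\<Sum>(core0 2 Y) = ?b + 2 * (?a choose 2) + 2 * (?b choose 2)"
    using sum_decomp[OF p0 fc] rc by (simp add: numeral_2_eq_2)
  have c0: "card (core0 2 Y) = ?a + ?b"
    using card_run[OF p0 fc] rc by (simp add: numeral_2_eq_2)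
  have d: "dd Y = int ?a - int ?b"
    unfolding dd_def using sum_run[OF p0 assms, of "\<lambda>x. (-1::int)^x"]
    by (simp add: numeral_2_eq_2 power_add power_mult)
  have h: "\<Sum>(core0 2 Y) = (card (core0 2 Y) choose 2) + wt (core0 2 Y)" using HC[OF fc] .
  have ch: "\<And>n. 2 * int (n choose 2) = int n * (int n - 1)"
  proof -
    fix n :: nat
    have "2 * (n choose 2) = n * (n - 1)" by (induct n) (auto simp: choose2_Suc algebra_simps)
    then have "int (2 * (n choose 2)) = int (n * (n - 1))" by simp
    then show "2 * int (n choose 2) = int n * (int n - 1)" by (cases n) (auto simp: algebra_simps)
  qed
  have "2 * int (\<Sum>(core0 2 Y)) = 2 * int ?b + 2 * (2 * int (?a choose 2)) + 2 * (2 * int (?b choose 2))"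
    using s0 by simp
  then have "2 * int (wt (core0 2 Y)) = 2 * int ?b + 2 * (2 * int (?a choose 2)) + 2 * (2 * int (?b choose 2)) - 2 * int (?a + ?b choose 2)"
    using h c0 by simp
  then show "2 * int (wt (core0 2 Y)) = dd Y * (dd Y - 1)"
    unfolding d ch by (simp add: algebra_simps)
qed



definition HPs :: "nat set \<Rightarrow> nat" where
  "HPs X = (\<Prod>x\<in>X. \<Prod>y\<in>{y. y < x \<and> y \<notin> X}. x - y)"

definition Dls :: "nat set \<Rightarrow> nat" where
  "Dls X = (\<Prod>x\<in>X. \<Prod>y\<in>{y\<in>X. y < x}. x - y)"

lemma fact_as_prod: "fact x = (\<Prod>y\<in>{..<x}. x - y)"
proof -
  have "fact x = (\<Prod>i=0..<x. x - i)" using fact_prod_rev[of x, where 'a=nat] by simp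
  then show ?thesis by (simp add: atLeast0LessThan)
qed

lemma fact_split:
  assumes "finite X"
  shows "(\<Prod>x\<in>X. fact x) = Dls X * HPs X"
proof -
  have "\<And>x. fact x = (\<Prod>y\<in>{y\<in>X. y < x}. x - y) * (\<Prod>y\<in>{y. y < x \<and> y \<notin> X}. x - y)"
  proof -
    fix x :: nat
    have "{..<x} = {y\<in>X. y < x} \<union> {y. y < x \<and> y \<notin> X}" by auto
    moreover have "{y\<in>X. y < x} \<inter> {y. y < x \<and> y \<notin> X} = {}" by auto
    ultimately show "fact x = (\<Prod>y\<in>{y\<in>X. y < x}. x - y) * (\<Prod>y\<in>{y. y < x \<and> y \<notin> X}. x - y)"
      unfolding fact_as_prod by (metis (no_types, lifting) finite_Un finite_lessThan prod.union_disjoint)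
  qed
  then show ?thesis unfolding Dls_def HPs_def by (simp add: prod.distrib)
qed

definition pg :: "nat \<Rightarrow> nat set \<Rightarrow> nat \<Rightarrow> nat" where
  "pg p X x = card {y. y < x \<and> y \<notin> X \<and> p dvd (x - y)}"

lemma pg_run:
  assumes "p > 0" "i < p"
  shows "pg p X (i + p*q) = gaps (run p X i) q"
proof -
  have eq: "{y. y < i + p*q \<and> y \<notin> X \<and> p dvd (i + p*q - y)} =
        (\<lambda>q'. i + p*q') ` {q'. q' < q \<and> q' \<notin> run p X i}"
  proof (rule set_eqI, rule iffI)
    fix y assume "y \<in> {y. y < i + p*q \<and> y \<notin> X \<and> p dvd (i + p*q - y)}"
    then have y: "y < i + p*q" "y \<notin> X" "p dvd (i + p*q - y)" by auto
    then obtain t where t: "i + p*q - y = p*t" by (auto simp: dvd_def)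
    then have yt: "y + p*t = i + p*q" using y(1) by simp
    have "t \<le> q"
    proof (rule ccontr)
      assume "\<not> t \<le> q"
      then have "p*t \<ge> p*(q+1)" by (intro mult_le_mono2) simp
      then show False using yt assms by simp
    qed
    have "t \<ge> 1"
    proof (rule ccontr)
      assume "\<not> t \<ge> 1"
      then have "t = 0" by simp
      then show False using yt y(1) by simp
    qed
    have e1: "p*(q-t) = p*q - p*t" by (simp add: diff_mult_distrib2)
    have e2: "p*t \<le> p*q" using \<open>t \<le> q\<close> by simp
    have "y = i + p*(q - t)" using yt e1 e2 by linarith
    moreover have "q - t < q" using \<open>t \<ge> 1\<close> \<open>t \<le> q\<close> by simp
    moreover have "q - t \<notin> run p X i" using y(2) \<open>y = i + p*(q - t)\<close> by (simp add: run_def)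
    ultimately show "y \<in> (\<lambda>q'. i + p*q') ` {q'. q' < q \<and> q' \<notin> run p X i}" by auto
  next
    fix y assume "y \<in> (\<lambda>q'. i + p*q') ` {q'. q' < q \<and> q' \<notin> run p X i}"
    then obtain q' where q': "y = i + p*q'" "q' < q" "q' \<notin> run p X i" by auto
    have "i + p*q - y = p*(q - q')" using q' by (simp add: diff_mult_distrib2)
    then show "y \<in> {y. y < i + p*q \<and> y \<notin> X \<and> p dvd (i + p*q - y)}"
      using q' assms by (auto simp: run_def)
  qed
  have "inj (\<lambda>q'. i + p*q')" using assms by (auto simp: inj_def)
  then show ?thesis unfolding pg_def gaps_def eq
    by (simp add: card_image inj_on_def)
qed

lemma sum_pg:
  assumes "p > 0" "finite X"
  shows "(\<Sum>x\<in>X. pg p X x) = PP p X"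
  unfolding sum_run[OF assms] PP_def wt_def using pg_run[OF assms(1)] by simp

lemma hook_le_wt:
  assumes "finite X" "x \<in> X" "y < x" "y \<notin> X"
  shows "x - y \<le> wt X"
proof -
  let ?M = "X \<inter> {y<..<x}"
  have fM: "finite ?M" by simp
  have xM: "x \<notin> ?M" by simp
  have sub: "insert x ?M \<subseteq> X" using assms by auto
  have "gaps X x + card ?M \<le> gaps X x + (\<Sum>z\<in>?M. gaps X z)"
  proof -
    have "(\<Sum>z\<in>?M. (1::nat)) \<le> (\<Sum>z\<in>?M. gaps X z)"
    proof (rule sum_mono)
      fix z assume "z \<in> ?M"
      then have "y \<in> {w. w < z \<and> w \<notin> X}" using assms by auto
      then have "{w. w < z \<and> w \<notin> X} \<noteq> {}" by blast
      then show "1 \<le> gaps X z" unfolding gaps_def by (simp add: Suc_leI card_gt_0_iff)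
    qed
    then show ?thesis by simp
  qed
  also have "\<dots> = (\<Sum>z\<in>insert x ?M. gaps X z)" using fM xM by simp
  also have "\<dots> \<le> wt X" unfolding wt_def by (rule sum_mono2[OF assms(1) sub]) simp
  finally have A: "gaps X x + card ?M \<le> wt X" .
  have "card ({y..<x} - X) \<le> gaps X x"
    unfolding gaps_def by (rule card_mono) auto
  moreover have "{y..<x} \<inter> X = ?M"
  proof -
    have "\<And>z. z \<in> X \<Longrightarrow> y \<le> z \<Longrightarrow> y < z" using assms(4) le_neq_implies_less by blast
    then show ?thesis by auto
  qed
  moreover have "card {y..<x} = card ({y..<x} - X) + card ({y..<x} \<inter> X)"
    using card_Int_Diff[of "{y..<x}" X] by simp
  ultimately show ?thesis using A by simp
qed

lemma mult_small:
  fixes p l :: nat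
  assumes "prime p" "0 < l" "l < p^2"
  shows "multiplicity p l \<le> (if p dvd l then 1 else 0)"
proof (cases "p dvd l")
  case False
  then show ?thesis by (simp add: not_dvd_imp_multiplicity_0)
next
  case True
  show ?thesis
  proof (rule ccontr)
    assume "\<not> ?thesis"
    then have "multiplicity p l \<ge> 2" using True by simp
    then have "p^2 dvd p^(multiplicity p l)" by (rule le_imp_power_dvd)
    moreover have "p^(multiplicity p l) dvd l" by (rule multiplicity_dvd)
    ultimately have "p^2 dvd l" by (rule dvd_trans)
    then have "p^2 \<le> l" using assms(2) by (simp add: dvd_imp_le)
    then show False using assms(3) by simp
  qed
qed

lemma mult_HPs:
  assumes "prime p" "finite X" "wt X < p^2"
  shows "multiplicity p (HPs X) \<le> PP p X"
proof -
  have p0: "p > 0" using assms(1) prime_gt_0_nat by blast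
  have fin: "\<And>x. finite {y. y < x \<and> y \<notin> X}" by simp
  have "multiplicity p (HPs X) = (\<Sum>x\<in>X. multiplicity p (\<Prod>y\<in>{y. y < x \<and> y \<notin> X}. x - y))"
    unfolding HPs_def
    by (rule prime_elem_multiplicity_prod_distrib) (use assms(1,2) in \<open>auto simp: prod_zero_iff\<close>)
  also have "\<dots> = (\<Sum>x\<in>X. \<Sum>y\<in>{y. y < x \<and> y \<notin> X}. multiplicity p (x - y))"
    by (intro sum.cong refl prime_elem_multiplicity_prod_distrib) (use assms(1) in auto)
  also have "\<dots> \<le> (\<Sum>x\<in>X. \<Sum>y\<in>{y. y < x \<and> y \<notin> X}. (if p dvd (x - y) then 1 else 0))"
  proof (intro sum_mono)
    fix x y assume "x \<in> X" "y \<in> {y. y < x \<and> y \<notin> X}"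
    then have "x - y \<le> wt X" "0 < x - y" using hook_le_wt[OF assms(2)] by auto
    then show "multiplicity p (x - y) \<le> (if p dvd (x - y) then 1 else 0)"
      using mult_small[OF assms(1)] assms(3) by simp
  qed
  also have "\<dots> = (\<Sum>x\<in>X. pg p X x)"
    unfolding pg_def by (intro sum.cong refl) (simp add: sum.If_cases Int_def conj_assoc)
  also have "\<dots> = PP p X" using sum_pg[OF p0 assms(2)] .
  finally show ?thesis .
qed



definition rho :: "nat set \<Rightarrow> nat \<Rightarrow> rat" where
  "rho X x = (\<Prod>y\<in>X-{x}. (of_nat x - 1 - of_nat y) / (of_nat x - of_nat y))"

definition RR :: "nat set \<Rightarrow> rat \<Rightarrow> rat" where
  "RR X z = (\<Prod>y\<in>X. (z - 1 - of_nat y) / (z - of_nat y))"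

lemma rho_insert:
  assumes "finite S" "w \<notin> S" "x \<in> S"
  shows "rho (insert w S) x = rho S x * ((of_nat x - 1 - of_nat w) / (of_nat x - of_nat w))"
proof -
  have "insert w S - {x} = insert w (S - {x})" using assms by auto
  then show ?thesis unfolding rho_def using assms by (simp add: mult.commute)
qed

lemma rho_insert_self:
  assumes "finite S" "w \<notin> S"
  shows "rho (insert w S) w = RR S (of_nat w)"
proof -
  have "insert w S - {w} = S" using assms by auto
  then show ?thesis unfolding rho_def RR_def by simp
qed

lemma tm_alg:
  fixes a b z r :: rat
  assumes "a \<noteq> b" "z \<noteq> a" "z \<noteq> b"
  shows "r * ((a - 1 - b) / (a - b)) / (z - a) = r / (z - a) - (r / (z - a)) / (z - b) + (r / (b - a)) / (z - b)"
proof -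
  have d: "a - b \<noteq> 0" "z - a \<noteq> 0" "z - b \<noteq> 0" "b - a \<noteq> 0" using assms by auto
  show ?thesis using d by (simp add: divide_simps) (simp add: algebra_simps)
qed

lemma pf_alg:
  fixes z w Rz Rw :: rat
  assumes "z \<noteq> w"
  shows "Rw / (z - w) + ((1 - Rz) - (1 - Rz) / (z - w) + (1 - Rw) / (z - w)) = 1 - Rz * ((z - 1 - w) / (z - w))"
proof -
  have d: "z - w \<noteq> 0" using assms by auto
  show ?thesis using d by (simp add: divide_simps) (simp add: algebra_simps)
qed

lemma PF:
  assumes "finite S"
  shows "z \<notin> of_nat ` S \<Longrightarrow> (\<Sum>x\<in>S. rho S x / (z - of_nat x)) = 1 - RR S z"
  using assms
proof (induct S arbitrary: z rule: finite_induct)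
  case empty
  then show ?case by (simp add: RR_def)
next
  case (insert w S)
  let ?w = "of_nat w :: rat"
  have zw: "z \<noteq> ?w" using insert by auto
  have zS: "z \<notin> of_nat ` S" using insert by auto
  have wS: "?w \<notin> of_nat ` S" using insert by auto
  have IHz: "(\<Sum>x\<in>S. rho S x / (z - of_nat x)) = 1 - RR S z" using insert(3)[OF zS] .
  have IHw: "(\<Sum>x\<in>S. rho S x / (?w - of_nat x)) = 1 - RR S ?w" using insert(3)[OF wS] .
  have tm: "rho (insert w S) x / (z - of_nat x) =
      rho S x / (z - of_nat x) - (rho S x / (z - of_nat x)) / (z - ?w)
      + (rho S x / (?w - of_nat x)) / (z - ?w)" if "x \<in> S" for x
  proof -
    have xw: "of_nat x \<noteq> ?w" using that insert by auto
    have xz: "z \<noteq> of_nat x" using that zS by auto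
    have d: "?w - of_nat x \<noteq> 0" "of_nat x - ?w \<noteq> 0" "z - of_nat x \<noteq> 0" "z - ?w \<noteq> 0"
      using xw xz zw by auto
    show ?thesis unfolding rho_insert[OF insert(1,2) that] using tm_alg xw xz zw by metis
  qed
  have "(\<Sum>x\<in>insert w S. rho (insert w S) x / (z - of_nat x)) =
        rho (insert w S) w / (z - ?w) + (\<Sum>x\<in>S. rho (insert w S) x / (z - of_nat x))"
    using insert by simp
  also have "(\<Sum>x\<in>S. rho (insert w S) x / (z - of_nat x)) =
     (\<Sum>x\<in>S. rho S x / (z - of_nat x)) - (\<Sum>x\<in>S. rho S x / (z - of_nat x)) / (z - ?w)
      + (\<Sum>x\<in>S. rho S x / (?w - of_nat x)) / (z - ?w)"
    by (simp add: tm sum.distrib sum_subtractf sum_divide_distrib)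
  finally have "(\<Sum>x\<in>insert w S. rho (insert w S) x / (z - of_nat x)) =
     RR S ?w / (z - ?w) + ((1 - RR S z) - (1 - RR S z) / (z - ?w) + (1 - RR S ?w) / (z - ?w))"
    unfolding IHz IHw rho_insert_self[OF insert(1,2)] .
  also have "\<dots> = 1 - RR S z * ((z - 1 - ?w) / (z - ?w))"
    using zw by (rule pf_alg)
  also have "\<dots> = 1 - RR (insert w S) z"
    unfolding RR_def using insert by (simp add: mult.commute)
  finally show ?case .
qed

lemma A01:
  assumes "finite S"
  shows "(\<Sum>x\<in>S. rho S x) = of_nat (card S) \<and>
         (\<Sum>x\<in>S. of_nat x * rho S x) = of_nat (\<Sum>S) - of_nat (card S) * (of_nat (card S) - 1) / 2"
  using assms
proof (induct S rule: finite_induct)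
  case empty
  then show ?case by simp
next
  case (insert w S)
  let ?w = "of_nat w :: rat"
  have wS: "?w \<notin> of_nat ` S" using insert by auto
  have P: "(\<Sum>x\<in>S. rho S x / (?w - of_nat x)) = 1 - RR S ?w" using PF[OF insert(1) wS] .
  have t0: "rho (insert w S) x = rho S x - rho S x / (?w - of_nat x) * (-1)" if "x \<in> S" for x
  proof -
    have xw: "of_nat x \<noteq> ?w" using that insert by auto
    have d: "?w - of_nat x \<noteq> 0" "of_nat x - ?w \<noteq> 0" using xw by auto
    show ?thesis unfolding rho_insert[OF insert(1,2) that] using d by (simp add: field_simps)
  qed
  have t1: "of_nat x * rho (insert w S) x = of_nat x * rho S x - rho S x + ?w * (rho S x / (?w - of_nat x))"
    if "x \<in> S" for x
  proof -
    have xw: "of_nat x \<noteq> ?w" using that insert by auto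
    have d: "?w - of_nat x \<noteq> 0" "of_nat x - ?w \<noteq> 0" using xw by auto
    show ?thesis unfolding rho_insert[OF insert(1,2) that] using d by (simp add: field_simps)
  qed
  have s0: "(\<Sum>x\<in>S. rho (insert w S) x) = (\<Sum>x\<in>S. rho S x) + (1 - RR S ?w)"
    using t0 P by (simp add: sum.distrib sum_subtractf)
  have s1'': "(\<Sum>x\<in>S. ?w * (rho S x / (?w - of_nat x))) = ?w * (\<Sum>x\<in>S. rho S x / (?w - of_nat x))"
    by (simp add: sum_distrib_left)
  have s1': "(\<Sum>x\<in>S. ?w * (rho S x / (?w - of_nat x))) = ?w * (1 - RR S ?w)"
    using P s1'' by simp
  have s1: "(\<Sum>x\<in>S. of_nat x * rho (insert w S) x) = (\<Sum>x\<in>S. of_nat x * rho S x) - (\<Sum>x\<in>S. rho S x) + ?w * (1 - RR S ?w)"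
    unfolding s1'[symmetric] using t1 by (simp add: sum.distrib sum_subtractf)
  have e0: "(\<Sum>x\<in>insert w S. rho (insert w S) x) = RR S ?w + (\<Sum>x\<in>S. rho (insert w S) x)"
    using insert rho_insert_self[OF insert(1,2)] by simp
  have e1: "(\<Sum>x\<in>insert w S. of_nat x * rho (insert w S) x) = ?w * RR S ?w + (\<Sum>x\<in>S. of_nat x * rho (insert w S) x)"
    using insert rho_insert_self[OF insert(1,2)] by simp
  show ?case
    using e0 e1 s0 s1 insert(3) insert(1,2) by (simp add: field_simps)
qed



lemma two_choose2: "2 * (n choose 2) = n * (n - 1)"
  by (induct n) (auto simp: choose2_Suc algebra_simps)

lemma Dls_insert:
  assumes "finite Y" "a \<notin> Y"
  shows "Dls (insert a Y) = Dls Y * (\<Prod>y\<in>{y\<in>Y. y < a}. a - y) * (\<Prod>y\<in>{y\<in>Y. a < y}. y - a)"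
proof -
  have "Dls (insert a Y) = (\<Prod>y\<in>{y\<in>insert a Y. y < a}. a - y) *
          (\<Prod>x\<in>Y. \<Prod>y\<in>{y\<in>insert a Y. y < x}. x - y)"
    unfolding Dls_def using assms by simp
  also have "{y\<in>insert a Y. y < a} = {y\<in>Y. y < a}" by auto
  also have "(\<Prod>x\<in>Y. \<Prod>y\<in>{y\<in>insert a Y. y < x}. x - y) =
       (\<Prod>x\<in>Y. (\<Prod>y\<in>{y\<in>Y. y < x}. x - y) * (if a < x then x - a else 1))"
  proof (rule prod.cong[OF refl])
    fix x assume "x \<in> Y"
    show "(\<Prod>y\<in>{y\<in>insert a Y. y < x}. x - y) = (\<Prod>y\<in>{y\<in>Y. y < x}. x - y) * (if a < x then x - a else 1)"
    proof (cases "a < x")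
      case True
      then have "{y\<in>insert a Y. y < x} = insert a {y\<in>Y. y < x}" by auto
      then show ?thesis using True assms by (simp add: mult.commute)
    next
      case False
      then have "{y\<in>insert a Y. y < x} = {y\<in>Y. y < x}" by auto
      then show ?thesis using False by simp
    qed
  qed
  also have "\<dots> = Dls Y * (\<Prod>x\<in>Y. if a < x then x - a else 1)"
    unfolding Dls_def by (simp add: prod.distrib)
  also have "(\<Prod>x\<in>Y. if a < x then x - a else 1) = (\<Prod>y\<in>{y\<in>Y. a < y}. y - a)"
    using assms(1) by (simp add: prod.If_cases Int_def)
  finally show ?thesis by (simp add: mult.commute mult.left_commute)
qed

lemma HPs_pos: "finite X \<Longrightarrow> HPs X > 0"
  unfolding HPs_def by (auto intro!: prod_pos)

lemma Dls_pos: "finite X \<Longrightarrow> Dls X > 0"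
  unfolding Dls_def by (auto intro!: prod_pos)

lemma inv_HPs:
  assumes "finite X"
  shows "1 / (of_nat (HPs X) :: rat) = of_nat (Dls X) / (\<Prod>x\<in>X. fact x)"
proof -
  have "(\<Prod>x\<in>X. fact x :: rat) = of_nat (\<Prod>x\<in>X. fact x)" by (simp add: of_nat_prod)
  also have "\<dots> = of_nat (Dls X) * of_nat (HPs X)" using fact_split[OF assms] by simp
  finally show ?thesis using HPs_pos[OF assms] Dls_pos[OF assms] by (simp add: field_simps)
qed

lemma rho_split:
  assumes "finite X" "x \<in> X" "x \<ge> 1" "x - 1 \<notin> X"
  defines "Y \<equiv> X - {x}"
  shows "rho X x = (of_nat (\<Prod>y\<in>{y\<in>Y. y < x}. x - 1 - y) / of_nat (\<Prod>y\<in>{y\<in>Y. y < x}. x - y)) *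
                   (of_nat (\<Prod>y\<in>{y\<in>Y. x < y}. y - (x - 1)) / of_nat (\<Prod>y\<in>{y\<in>Y. x < y}. y - x))"
proof -
  have fY: "finite Y" using assms(1) by (simp add: Y_def)
  have xnY: "x \<notin> Y" by (simp add: Y_def)
  have Yu: "Y = {y\<in>Y. y < x} \<union> {y\<in>Y. x < y}"
  proof
    show "Y \<subseteq> {y\<in>Y. y < x} \<union> {y\<in>Y. x < y}"
    proof
      fix y assume yY: "y \<in> Y"
      then have "y < x \<or> x < y" using xnY by (metis linorder_neqE_nat)
      then show "y \<in> {y\<in>Y. y < x} \<union> {y\<in>Y. x < y}" using yY by blast
    qed
  qed auto
  have "rho X x = (\<Prod>y\<in>Y. (of_nat x - 1 - of_nat y) / (of_nat x - of_nat y))"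
    by (simp add: rho_def Y_def)
  also have "\<dots> = (\<Prod>y\<in>{y\<in>Y. y < x}. (of_nat x - 1 - of_nat y) / (of_nat x - of_nat y)) *
                  (\<Prod>y\<in>{y\<in>Y. x < y}. (of_nat x - 1 - of_nat y) / (of_nat x - of_nat y))"
  proof -
    have "(\<Prod>y\<in>{y\<in>Y. y < x} \<union> {y\<in>Y. x < y}. (of_nat x - 1 - of_nat y) / (of_nat x - of_nat y)) =
      (\<Prod>y\<in>{y\<in>Y. y < x}. (of_nat x - 1 - of_nat y) / (of_nat x - of_nat y)) *
                  (\<Prod>y\<in>{y\<in>Y. x < y}. (of_nat x - 1 - of_nat y) / (of_nat x - of_nat y :: rat))"
      by (rule prod.union_disjoint) (use fY in auto)
    then show ?thesis unfolding Yu[symmetric] .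
  qed
  also have "(\<Prod>y\<in>{y\<in>Y. y < x}. (of_nat x - 1 - of_nat y) / (of_nat x - of_nat y)) =
             (\<Prod>y\<in>{y\<in>Y. y < x}. (of_nat (x - 1 - y) :: rat) / of_nat (x - y))"
  proof (rule prod.cong[OF refl])
    fix y assume "y \<in> {y\<in>Y. y < x}"
    then have yx: "y < x" "y \<in> X" by (auto simp: Y_def)
    then have "y \<noteq> x - 1" using assms(4) by blast
    then have "y < x - 1" using yx(1) by linarith
    then show "(of_nat x - 1 - of_nat y) / (of_nat x - of_nat y) = (of_nat (x - 1 - y) :: rat) / of_nat (x - y)"
      by (simp add: of_nat_diff)
  qed
  also have "(\<Prod>y\<in>{y\<in>Y. x < y}. (of_nat x - 1 - of_nat y) / (of_nat x - of_nat y)) =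
             (\<Prod>y\<in>{y\<in>Y. x < y}. (of_nat (y - (x - 1)) :: rat) / of_nat (y - x))"
  proof (rule prod.cong[OF refl])
    fix y assume "y \<in> {y\<in>Y. x < y}"
    then have "x < y" by auto
    then have e: "(of_nat x - 1 - of_nat y :: rat) = - of_nat (y - (x - 1))" "(of_nat x - of_nat y :: rat) = - of_nat (y - x)"
      using assms(3) by (simp_all add: of_nat_diff)
    show "(of_nat x - 1 - of_nat y) / (of_nat x - of_nat y) = (of_nat (y - (x - 1)) :: rat) / of_nat (y - x)"
      unfolding e(1) e(2) by (rule minus_divide_divide)
  qed
  finally show ?thesis by (simp add: of_nat_prod prod_dividef)
qed

lemma branch_term:
  assumes "finite X" "x \<in> X" "x \<ge> 1" "x - 1 \<notin> X"
  shows "1 / (of_nat (HPs (insert (x - 1) (X - {x}))) :: rat) = (1 / of_nat (HPs X)) * of_nat x * rho X x"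
proof -
  define Y where "Y = X - {x}"
  have fY: "finite Y" using assms by (simp add: Y_def)
  have xY: "x \<notin> Y" "x - 1 \<notin> Y" using assms by (auto simp: Y_def)
  have XY: "X = insert x Y" using assms by (auto simp: Y_def)
  have A: "{y\<in>Y. y < x - 1} = {y\<in>Y. y < x}"
  proof (intro Collect_cong conj_cong refl)
    fix y assume "y \<in> Y"
    then have "y \<noteq> x - 1" "y \<noteq> x" using xY by auto
    then show "y < x - 1 \<longleftrightarrow> y < x" using assms(3) by linarith
  qed
  have B: "{y\<in>Y. x - 1 < y} = {y\<in>Y. x < y}"
  proof (intro Collect_cong conj_cong refl)
    fix y assume "y \<in> Y"
    then have "y \<noteq> x - 1" "y \<noteq> x" using xY by auto
    then show "x - 1 < y \<longleftrightarrow> x < y" using assms(3) by linarith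
  qed
  define L where "L = (\<Prod>y\<in>{y\<in>Y. y < x}. x - y)"
  define U where "U = (\<Prod>y\<in>{y\<in>Y. x < y}. y - x)"
  define L' where "L' = (\<Prod>y\<in>{y\<in>Y. y < x}. x - 1 - y)"
  define U' where "U' = (\<Prod>y\<in>{y\<in>Y. x < y}. y - (x - 1))"
  have LU: "L > 0" "U > 0" unfolding L_def U_def by (auto intro!: prod_pos)
  have D1: "Dls X = Dls Y * L * U" unfolding XY L_def U_def by (rule Dls_insert[OF fY xY(1)])
  have D2: "Dls (insert (x - 1) Y) = Dls Y * L' * U'"
    unfolding L'_def U'_def Dls_insert[OF fY xY(2)] A B by simp
  have F1: "(\<Prod>z\<in>X. fact z :: rat) = (\<Prod>z\<in>Y. fact z) * (of_nat x * fact (x - 1))"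
    unfolding XY using fY xY assms(3) by (simp add: fact_reduce[of x])
  have F2: "(\<Prod>z\<in>insert (x - 1) Y. fact z :: rat) = (\<Prod>z\<in>Y. fact z) * fact (x - 1)"
    using fY xY by simp
  have r: "rho X x = (of_nat L' / of_nat L) * (of_nat U' / of_nat U)"
    using rho_split[OF assms] unfolding L_def U_def L'_def U'_def Y_def by simp
  have fz: "(\<Prod>z\<in>Y. fact z :: rat) \<noteq> 0" "(fact (x - 1) :: rat) \<noteq> 0" using fY by (auto simp: prod_zero_iff)
  have x0: "(of_nat x :: rat) \<noteq> 0" using assms(3) by simp
  show ?thesis
    unfolding Y_def[symmetric] inv_HPs[OF assms(1)] inv_HPs[OF fY[THEN finite_insert[THEN iffD2]]] D1 D2 F1 F2 r
    using LU fz x0 by (simp add: field_simps)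
qed

lemma rho_bad:
  assumes "finite X" "x \<in> X" "\<not> (x \<ge> 1 \<and> x - 1 \<notin> X)"
  shows "of_nat x * rho X x = 0"
proof (cases "x = 0")
  case True then show ?thesis by simp
next
  case False
  then have mem: "x - 1 \<in> X - {x}" using assms by auto
  have z: "(of_nat x - 1 - of_nat (x - 1)) / (of_nat x - of_nat (x - 1)) = (0 :: rat)" using False by (simp add: of_nat_diff)
  have "rho X x = 0" unfolding rho_def
  proof (rule prod_zero)
    show "finite (X - {x})" using assms(1) by simp
    show "\<exists>y\<in>X - {x}. (of_nat x - 1 - of_nat y) / (of_nat x - of_nat y) = (0::rat)"
      using mem z by blast
  qed
  then show ?thesis by simp
qed

lemma wt_branch:
  assumes "finite X" "x \<in> X" "x \<ge> 1" "x - 1 \<notin> X"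
  shows "wt (insert (x - 1) (X - {x})) + 1 = wt X"
proof -
  define Y where "Y = X - {x}"
  have fY: "finite Y" using assms by (simp add: Y_def)
  have xY: "x \<notin> Y" "x - 1 \<notin> Y" using assms by (auto simp: Y_def)
  have XY: "X = insert x Y" using assms by (auto simp: Y_def)
  have "\<Sum>X = \<Sum>Y + x" "\<Sum>(insert (x - 1) Y) = \<Sum>Y + (x - 1)" "card X = card (insert (x - 1) Y)"
    unfolding XY using fY xY by simp_all
  then show ?thesis using HC[OF assms(1)] HC[of "insert (x - 1) Y"] fY assms(3) unfolding Y_def by simp
qed

lemma branch:
  assumes "finite X"
  shows "of_nat (wt X) / (of_nat (HPs X) :: rat) =
         (\<Sum>x\<in>{x\<in>X. x \<ge> 1 \<and> x - 1 \<notin> X}. 1 / of_nat (HPs (insert (x - 1) (X - {x}))))"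
proof -
  have "(of_nat (wt X) :: rat) = (\<Sum>x\<in>X. of_nat x * rho X x)"
  proof -
    have "(\<Sum>x\<in>X. of_nat x * rho X x) = of_nat (\<Sum>X) - of_nat (card X) * (of_nat (card X) - 1) / (2::rat)"
      using A01[OF assms] by simp
    also have "of_nat (card X) * (of_nat (card X) - 1) / (2::rat) = of_nat (card X choose 2)"
    proof -
      have "(2::rat) * of_nat (card X choose 2) = of_nat (card X) * (of_nat (card X) - 1)"
        using arg_cong[OF two_choose2[of "card X"], of "of_nat :: nat \<Rightarrow> rat"]
        by (cases "card X") (simp_all add: of_nat_diff algebra_simps)
      then show ?thesis by simp
    qed
    finally show ?thesis using HC[OF assms] by simp
  qed
  then have "of_nat (wt X) / (of_nat (HPs X) :: rat) = (\<Sum>x\<in>X. (1 / of_nat (HPs X)) * of_nat x * rho X x)"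
    by (simp add: sum_divide_distrib)
  also have "\<dots> = (\<Sum>x\<in>{x\<in>X. x \<ge> 1 \<and> x - 1 \<notin> X}. 1 / of_nat (HPs (insert (x - 1) (X - {x}))))"
  proof (rule sum.mono_neutral_cong_right)
    show "finite X" by (rule assms)
    show "{x\<in>X. x \<ge> 1 \<and> x - 1 \<notin> X} \<subseteq> X" by blast
    show "\<forall>i\<in>X - {x\<in>X. x \<ge> 1 \<and> x - 1 \<notin> X}. 1 / of_nat (HPs X) * of_nat i * rho X i = 0"
    proof
      fix i assume "i \<in> X - {x\<in>X. x \<ge> 1 \<and> x - 1 \<notin> X}"
      then have "of_nat i * rho X i = 0" using rho_bad[OF assms, of i] by blast
      then show "1 / of_nat (HPs X) * of_nat i * rho X i = 0" by (simp add: mult.assoc)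
    qed
    show "1 / of_nat (HPs X) * of_nat x * rho X x = 1 / of_nat (HPs (insert (x - 1) (X - {x})))"
      if "x \<in> {x\<in>X. x \<ge> 1 \<and> x - 1 \<notin> X}" for x
      using branch_term[OF assms, of x] that by simp
  qed
  finally show ?thesis .
qed

lemma integral:
  "finite X \<Longrightarrow> (fact (wt X) :: rat) / of_nat (HPs X) \<in> \<int>"
proof (induct "wt X" arbitrary: X)
  case 0
  then have "\<forall>x\<in>X. gaps X x = 0" by (simp add: wt_def)
  then have e: "\<forall>x\<in>X. {y. y < x \<and> y \<notin> X} = {}" unfolding gaps_def by auto
  then have "HPs X = (\<Prod>x\<in>X. 1)" unfolding HPs_def by (intro prod.cong refl) (simp add: e)
  then have "HPs X = 1" by simp
  then show ?case using 0 by simp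
next
  case (Suc k)
  let ?G = "{x\<in>X. x \<ge> 1 \<and> x - 1 \<notin> X}"
  have "(fact (wt X) :: rat) / of_nat (HPs X) = fact k * (of_nat (wt X) / of_nat (HPs X))"
  proof -
    have "(fact (wt X) :: rat) = of_nat (wt X) * fact k" unfolding Suc(2)[symmetric] by simp
    then show ?thesis by simp
  qed
  also have "\<dots> = (\<Sum>x\<in>?G. fact k / of_nat (HPs (insert (x - 1) (X - {x}))))"
    unfolding branch[OF Suc(3)] by (simp add: sum_distrib_left)
  also have "\<dots> \<in> \<int>"
  proof (rule Ints_sum)
    fix x assume "x \<in> ?G"
    then have "wt (insert (x - 1) (X - {x})) + 1 = wt X" using wt_branch[OF Suc(3), of x] by blast
    then have w: "k = wt (insert (x - 1) (X - {x}))" using Suc(2) by simp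
    show "(fact k :: rat) / of_nat (HPs (insert (x - 1) (X - {x}))) \<in> \<int>"
      using Suc(1)[OF w] Suc(3) w by simp
  qed
  finally show ?case .
qed

lemma HPs_dvd: "finite X \<Longrightarrow> HPs X dvd fact (wt X)"
proof -
  assume f: "finite X"
  obtain z where z: "(fact (wt X) :: rat) / of_nat (HPs X) = of_int z"
    using integral[OF f] Ints_cases by metis
  have "(fact (wt X) :: rat) = of_int z * of_nat (HPs X)" using z HPs_pos[OF f] by (simp add: field_simps)
  then have "int (fact (wt X)) = z * int (HPs X)"
    by (metis (mono_tags) of_int_eq_iff of_int_mult of_int_of_nat_eq of_nat_fact)
  then have "int (HPs X) dvd int (fact (wt X))" by simp
  then show ?thesis by (simp only: of_nat_dvd_iff)
qed



lemma deg_strict: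
  assumes "is_partition lam" "i < j" "j < length lam"
  shows "deg lam i < deg lam j"
proof -
  let ?r = "length lam"
  have "lam ! (?r - 1 - j) \<ge> lam ! (?r - 1 - i)"
    using sorted_wrt_nth_less[of "(\<ge>)" lam "?r - 1 - j" "?r - 1 - i"] assms
    unfolding is_partition_def by simp
  then show ?thesis unfolding deg_def using assms(2) by simp
qed

lemma deg_inj: "is_partition lam \<Longrightarrow> inj_on (deg lam) {..<length lam}"
  unfolding inj_on_def by (metis deg_strict lessThan_iff linorder_neqE_nat less_irrefl)

lemma finite_beta: "finite (beta_set lam)"
  unfolding beta_set_def by simp

lemma card_beta: "is_partition lam \<Longrightarrow> card (beta_set lam) = length lam"
  unfolding beta_set_def using deg_inj card_image by fastforce

lemma sum_lessThan_choose: "(\<Sum>j<r. j) = r choose 2"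
  by (induct r) (simp_all add: choose2_Suc)

lemma wt_beta:
  assumes "is_partition lam"
  shows "wt (beta_set lam) = sum_list lam"
proof -
  let ?r = "length lam"
  have "\<Sum>(beta_set lam) = (\<Sum>j<?r. deg lam j)"
    unfolding beta_set_def using sum.reindex[OF deg_inj[OF assms], of id] by simp
  also have "\<dots> = (\<Sum>j<?r. lam ! (?r - Suc j)) + (\<Sum>j<?r. j)"
    unfolding deg_def by (simp add: sum.distrib)
  also have "(\<Sum>j<?r. lam ! (?r - Suc j)) = (\<Sum>j<?r. lam ! j)"
    by (rule sum.nat_diff_reindex)
  also have "\<dots> = sum_list lam" by (simp add: sum_list_sum_nth atLeast0LessThan)
  finally show ?thesis using HC[OF finite_beta, of lam] card_beta[OF assms] sum_lessThan_choose
    by simp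
qed

lemma below_image:
  assumes "is_partition lam" "j < length lam"
  shows "{y\<in>beta_set lam. y < deg lam j} = deg lam ` {..<j}"
proof
  show "{y\<in>beta_set lam. y < deg lam j} \<subseteq> deg lam ` {..<j}"
  proof
    fix y assume "y \<in> {y\<in>beta_set lam. y < deg lam j}"
    then obtain i where i: "i < length lam" "y = deg lam i" "deg lam i < deg lam j"
      unfolding beta_set_def by auto
    have "i < j"
    proof (rule ccontr)
      assume "\<not> i < j"
      then have "j \<le> i" by simp
      then have "deg lam j \<le> deg lam i" using deg_strict[OF assms(1) _ i(1)]
        by (cases "j = i") (auto intro: less_imp_le)
      then show False using i by simp
    qed
    then show "y \<in> deg lam ` {..<j}" using i by auto
  qed
  show "deg lam ` {..<j} \<subseteq> {y\<in>beta_set lam. y < deg lam j}"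
    using assms deg_strict unfolding beta_set_def by auto
qed

lemma Delta_beta:
  assumes "is_partition lam"
  shows "Delta lam = int (Dls (beta_set lam))"
proof -
  let ?r = "length lam" and ?X = "beta_set lam"
  have "Dls ?X = (\<Prod>j<?r. \<Prod>y\<in>{y\<in>?X. y < deg lam j}. deg lam j - y)"
    unfolding Dls_def beta_set_def using prod.reindex[OF deg_inj[OF assms]] by (simp add: beta_set_def[symmetric] comp_def)
  also have "\<dots> = (\<Prod>j<?r. \<Prod>i<j. deg lam j - deg lam i)"
  proof (rule prod.cong[OF refl])
    fix j assume j: "j \<in> {..<?r}"
    have inj: "inj_on (deg lam) {..<j}" using deg_inj[OF assms] j by (auto intro: inj_on_subset)
    show "(\<Prod>y\<in>{y\<in>?X. y < deg lam j}. deg lam j - y) = (\<Prod>i<j. deg lam j - deg lam i)"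
      unfolding below_image[OF assms j[simplified]] using prod.reindex[OF inj] by (simp add: comp_def)
  qed
  finally have "int (Dls ?X) = (\<Prod>j<?r. \<Prod>i<j. int (deg lam j - deg lam i))" by (simp add: of_nat_prod)
  also have "\<dots> = (\<Prod>j<?r. \<Prod>i<j. int (deg lam j) - int (deg lam i))"
    by (intro prod.cong refl) (use deg_strict[OF assms] in \<open>auto simp: of_nat_diff less_imp_le\<close>)
  finally show ?thesis unfolding Delta_def by simp
qed

lemma fact_beta:
  assumes "is_partition lam"
  shows "(\<Prod>j<length lam. fact (deg lam j)) = (\<Prod>x\<in>beta_set lam. fact x :: 'a::{comm_semiring_1,semiring_char_0})"
  unfolding beta_set_def using prod.reindex[OF deg_inj[OF assms], of "fact :: nat \<Rightarrow> 'a"] by (simp add: comp_def)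

lemma F_beta:
  assumes "is_partition lam"
  shows "F lam = fact (sum_list lam) / of_nat (HPs (beta_set lam))"
proof -
  let ?X = "beta_set lam"
  have "F lam = fact (sum_list lam) * of_int (Delta lam) / of_int (\<Prod>j<length lam. fact (deg lam j))"
    unfolding F_def H_def by simp
  also have "of_int (\<Prod>j<length lam. fact (deg lam j)) = (\<Prod>x\<in>?X. fact x :: rat)"
    unfolding fact_beta[OF assms] by (simp add: of_int_prod)
  also have "of_int (Delta lam) = (of_nat (Dls ?X) :: rat)" unfolding Delta_beta[OF assms] by simp
  finally have "F lam = fact (sum_list lam) * (of_nat (Dls ?X) / (\<Prod>x\<in>?X. fact x))" by simp
  also have "\<dots> = fact (sum_list lam) / of_nat (HPs ?X)"
    unfolding inv_HPs[OF finite_beta, symmetric] by simp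
  finally show ?thesis .
qed

lemma F_nat_beta:
  assumes "is_partition lam"
  shows "F_nat lam * HPs (beta_set lam) = fact (sum_list lam)"
proof -
  let ?X = "beta_set lam" and ?n = "sum_list lam"
  obtain c where c: "fact (wt ?X) = HPs ?X * c" using HPs_dvd[OF finite_beta] by (auto elim: dvdE)
  have w: "wt ?X = ?n" using wt_beta[OF assms] .
  have pos: "HPs ?X > 0" using HPs_pos[OF finite_beta] .
  have "F lam = of_nat c"
    unfolding F_beta[OF assms] using c w pos
    by (simp add: field_simps) (metis of_nat_fact of_nat_mult)
  then have "F_nat lam = c" unfolding F_nat_def by simp
  then show ?thesis using c w by simp
qed


lemma g_mono:
  fixes s t :: int
  assumes "0 \<le> s" "s \<le> t"
  shows "s * (s - 1) \<le> t * (t - 1)"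
proof -
  have "t * (t - 1) - s * (s - 1) = (t - s) * (t + s - 1)" by (simp add: algebra_simps)
  moreover have "(t - s) * (t + s - 1) \<ge> 0"
  proof (cases "t = s")
    case True then show ?thesis by simp
  next
    case False
    then have "t - s \<ge> 0" "t + s - 1 \<ge> 0" using assms by auto
    then show ?thesis by simp
  qed
  ultimately show ?thesis by linarith
qed

lemma final_arith:
  fixes m p k n P w0 :: nat and d d0 N h C :: int
  assumes m2: "m \<ge> 2" and pm: "p \<ge> 2 * m - 1"
    and hdef: "h = int ((m + 1) div 2)"
    and Cdef: "2 * C = int m * (int m + 1)"
    and k1: "1 \<le> k" and kh: "int k \<le> h + 1"
    and Ndef: "N = (if int k \<le> h then int k * int p - int k * (2 * (int m - int k) + 1) + C
                    else int k * int p)"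
    and nN: "int n < N"
    and nw: "n = w0 + p * P"
    and w0: "2 * int w0 \<ge> d0 * (d0 - 1)"
    and dd: "\<bar>d - d0\<bar> \<le> 2 * int P"
    and dm: "d = int m + 1 \<or> d = - int m"
  shows "P < k \<and> n < p * p"
proof -
  define NF where "NF j = j * int p - j * (2 * (int m - j) + 1) + C" for j :: int
  have h2: "2 * h = int m \<or> 2 * h = int m + 1" using hdef by (cases "even m") (auto elim!: evenE oddE)
  have NF2: "2 * NF j = 2 * j * int p + (int m + 1 - 2 * j) * (int m - 2 * j)" for j
    unfolding NF_def using Cdef by (simp add: algebra_simps)
  have NFd: "NF a - NF b = (a - b) * (int p - 2 * int m - 1 + 2 * a + 2 * b)" for a b
    unfolding NF_def by (simp add: algebra_simps)
  have NFmono: "NF b \<le> NF a" if "b \<le> a" "a + b \<ge> 1" for a b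
  proof -
    have "int p - 2 * int m - 1 + 2 * a + 2 * b \<ge> 0" using pm that m2 by linarith
    then have "(a - b) * (int p - 2 * int m - 1 + 2 * a + 2 * b) \<ge> 0" using that by simp
    then show ?thesis using NFd[of a b] by linarith
  qed
  have NFh: "NF h = h * int p"
  proof -
    have "(int m + 1 - 2 * h) * (int m - 2 * h) = 0" using h2 by auto
    then show ?thesis using NF2[of h] by linarith
  qed
  have h1: "h \<ge> 1" using hdef m2 by simp
  have Nle: "N \<le> (h + 1) * int p"
  proof (cases "int k \<le> h")
    case True
    then have "N = NF (int k)" using Ndef NF_def by simp
    also have "\<dots> \<le> NF h" using NFmono[of "int k" h] True k1 by simp
    also have "\<dots> \<le> (h + 1) * int p" using NFh by (simp add: algebra_simps)
    finally show ?thesis .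
  next
    case False
    then have "int k = h + 1" using kh by simp
    then show ?thesis using Ndef False by simp
  qed
  have hp: "h + 1 \<le> int p" using hdef pm m2 by linarith
  have "(h + 1) * int p \<le> int p * int p" using hp by (simp add: mult_right_mono)
  then have "int n < int p * int p" using nN Nle by linarith
  then have np: "n < p * p" by (simp flip: of_nat_mult)
  have "P < k"
  proof (rule ccontr)
    assume "\<not> P < k"
    then have Pk: "k \<le> P" by simp
    show False
    proof (cases "int P \<ge> h + 1")
      case True
      then have "(h + 1) * int p \<le> int P * int p" by (simp add: mult_right_mono)
      moreover have "int n \<ge> int P * int p" using nw by (simp add: algebra_simps)
      ultimately show False using Nle nN by linarith
    next
      case False
      then have Ph: "int P \<le> h" by simp
      then have kh': "int k \<le> h" using Pk by simp
      define s where "s = int m + 1 - 2 * int P"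
      define t where "t = (if d = int m + 1 then d0 else 1 - d0)"
      have s0: "s \<ge> 0" using Ph h2 s_def by linarith
      have tt: "t * (t - 1) = d0 * (d0 - 1)" unfolding t_def by (simp add: algebra_simps)
      have st: "s \<le> t" using dd dm unfolding t_def s_def by (auto simp: abs_le_iff)
      have "s * (s - 1) \<le> d0 * (d0 - 1)" using g_mono[OF s0 st] tt by simp
      then have "2 * NF (int P) \<le> 2 * int n"
        using NF2[of "int P"] w0 nw unfolding s_def by (simp add: algebra_simps)
      moreover have "NF (int k) \<le> NF (int P)" using NFmono[of "int k" "int P"] Pk k1 by simp
      moreover have "N = NF (int k)" using Ndef NF_def kh' by simp
      ultimately show False using nN by linarith
    qed
  qed
  then show ?thesis using np by simp
qed

lemma dd_remove:
  assumes "remove_2hook S T" "finite S"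
  shows "finite T \<and> dd T = dd S"
proof -
  obtain a where a: "a \<in> S" "a \<ge> 2" "a - 2 \<notin> S" "T = insert (a - 2) (S - {a})"
    using assms(1) unfolding remove_2hook_def by blast
  have f: "finite T" using a assms(2) by simp
  have "dd T = (-1)^(a - 2) + dd (S - {a})" unfolding dd_def a(4) using a assms(2) by simp
  also have "dd (S - {a}) = dd S - (-1)^a" unfolding dd_def using a assms(2) by (simp add: sum_diff1)
  also have "(-1::int)^(a - 2) = (-1)^a"
  proof -
    have "a = (a - 2) + 2" using a(2) by simp
    then have "(-1::int)^a = (-1)^(a-2) * (-1)^2" by (metis power_add)
    then show ?thesis by simp
  qed
  finally show ?thesis using f by simp
qed

lemma dd_star:
  assumes "remove_2hook\<^sup>*\<^sup>* S T" "finite S"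
  shows "finite T \<and> dd T = dd S"
  using assms
proof (induct rule: rtranclp_induct)
  case base then show ?case by simp
next
  case (step y z)
  then show ?case using dd_remove[of y z] by simp
qed

lemma irred_closed:
  assumes "\<not> (\<exists>U. remove_2hook T U)"
  shows "i + 2 * q \<in> T \<Longrightarrow> q' \<le> q \<Longrightarrow> i + 2 * q' \<in> T"
proof (induct q arbitrary: q')
  case 0 then show ?case by simp
next
  case (Suc q)
  have "i + 2 * q \<in> T"
  proof (rule ccontr)
    assume nq: "i + 2 * q \<notin> T"
    let ?a = "i + 2 * Suc q"
    have "?a - 2 = i + 2 * q" by simp
    then have "remove_2hook T (insert (?a - 2) (T - {?a}))"
      unfolding remove_2hook_def using Suc(2) nq by (intro bexI[of _ ?a]) auto
    then show False using assms by blast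
  qed
  then show ?case using Suc by (cases "q' = Suc q") auto
qed

lemma irred_PP:
  assumes "finite T" "\<not> (\<exists>U. remove_2hook T U)"
  shows "PP 2 T = 0"
proof -
  have "wt (run 2 T i) = 0" for i
  proof -
    have "gaps (run 2 T i) q = 0" if "q \<in> run 2 T i" for q
    proof -
      have "{y. y < q \<and> y \<notin> run 2 T i} = {}"
        using irred_closed[OF assms(2), of i q] that by (auto simp: run_def)
      then show ?thesis by (simp add: gaps_def)
    qed
    then show ?thesis by (simp add: wt_def)
  qed
  then show ?thesis by (simp add: PP_def)
qed

lemma core_cond:
  assumes "has_2core_size lam c"
  shows "2 * int c = dd (beta_set lam) * (dd (beta_set lam) - 1)"
proof -
  obtain T where T: "remove_2hook\<^sup>*\<^sup>* (beta_set lam) T" "\<not> (\<exists>U. remove_2hook T U)" "beta_size T = c"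
    using assms unfolding has_2core_size_def by blast
  have fT: "finite T" and dT: "dd T = dd (beta_set lam)" using dd_star[OF T(1) finite_beta] by auto
  have "beta_size T = wt T" unfolding beta_size_def using HC[OF fT] by simp
  also have "wt T = wt (core0 2 T)" using two_core(2)[OF fT] irred_PP[OF fT T(2)] by simp
  finally have "2 * int c = dd T * (dd T - 1)" using two_core(1)[OF fT] T(3) by simp
  then show ?thesis using dT by simp
qed

lemma L2:
  assumes "finite Y"
  shows "dd Y * (dd Y - 1) \<le> 2 * int (wt Y)"
  using two_core[OF assms] by simp

lemma choose_Suc2: "2 * int (Suc m choose 2) = int m * (int m + 1)"
proof -
  have "2 * (Suc m choose 2) = Suc m * m" using two_choose2[of "Suc m"] by simp
  then have "int (2 * (Suc m choose 2)) = int (Suc m * m)" by simp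
  then show ?thesis by (simp add: algebra_simps)
qed

theorem mainTheorem8:
  fixes m p k n :: nat
  assumes "m \<ge> 1" and "prime p" and "p \<ge> 2 * m - 1"
    and "k \<le> (m + 1) div 2 + 1"
    and "int n < NN m p k"
  shows "ex n m p \<ge> ereal (real_of_int (int (multiplicity p (fact n :: nat)) - (int k - 1)))"
  unfolding ex_def
proof (rule Inf_greatest)
  fix e assume "e \<in> {ereal (real (multiplicity p (F_nat lam))) | lam.
       is_partition lam \<and> sum_list lam = n \<and> has_2core_size lam (Suc m choose 2)}"
  then obtain lam where lam: "e = ereal (real (multiplicity p (F_nat lam)))" "is_partition lam"
    "sum_list lam = n" "has_2core_size lam (Suc m choose 2)" by blast
  define X where "X = beta_set lam"
  have fX: "finite X" unfolding X_def by (rule finite_beta)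
  have wX: "wt X = n" unfolding X_def using wt_beta[OF lam(2)] lam(3) by simp
  have cc: "dd X * (dd X - 1) = int m * (int m + 1)"
    using core_cond[OF lam(4)] choose_Suc2[of m] unfolding X_def by simp
  have dm: "dd X = int m + 1 \<or> dd X = - int m"
  proof -
    have "(dd X - (int m + 1)) * (dd X + int m) = 0" using cc by (simp add: algebra_simps)
    then show ?thesis by auto
  qed
  have p0: "p > 0" using assms(2) prime_gt_0_nat by blast
  have p2: "p \<ge> 2" using assms(2) prime_ge_2_nat by blast
  have L: "2 * int n \<ge> int m * (int m + 1)" using L2[OF fX] cc wX by simp
  have k1: "k \<ge> 1"
  proof (rule ccontr)
    assume "\<not> k \<ge> 1"
    then have "k = 0" by simp
    then have "NN m p k = int (Suc m choose 2)" unfolding NN_def by simp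
    then show False using assms(5) L choose_Suc2[of m] by linarith
  qed
  have dec: "wt X = wt (core0 p X) + p * PP p X" using wt_decomp(1)[OF p0 fX] .
  have key: "PP p X < k \<and> n < p * p"
  proof (cases "m = 1")
    case True
    have "NN m p k = int k * int p"
    proof (cases "k = 1")
      case True
      then show ?thesis using \<open>m = 1\<close> unfolding NN_def by (simp add: numeral_2_eq_2)
    next
      case False
      then have "k = 2" using k1 assms(4) \<open>m = 1\<close> by simp
      then show ?thesis using \<open>m = 1\<close> unfolding NN_def by (simp add: numeral_2_eq_2)
    qed
    then have nk: "int n < int k * int p" using assms(5) by simp
    have kle: "k \<le> 2" using assms(4) True by simp
    have "int (p * PP p X) \<le> int n" using dec wX by simp
    then have "int p * int (PP p X) < int p * int k" using nk by (simp add: algebra_simps)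
    then have PPk: "PP p X < k" using p0 by (simp add: mult_less_cancel_left)
    have "k * p \<le> p * p" using kle p2 by (intro mult_right_mono) auto
    moreover have "n < k * p" using nk by (metis of_nat_less_iff of_nat_mult)
    ultimately have "n < p * p" by linarith
    then show ?thesis using PPk by simp
  next
    case False
    then have m2: "m \<ge> 2" using assms(1) by simp
    have p3: "p \<ge> 3" using assms(3) m2 by simp
    have op: "odd p" using prime_odd_nat[OF assms(2)] p3 by simp
    define Y where "Y = core0 p X"
    have fY: "finite Y" unfolding Y_def using finite_core0[OF p0 fX] .
    have w0: "dd Y * (dd Y - 1) \<le> 2 * int (wt Y)" using L2[OF fY] .
    have dch: "\<bar>dd X - dd Y\<bar> \<le> 2 * int (PP p X)" unfolding Y_def by (rule dd_change[OF op fX])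
    have Ndef: "NN m p k = (if int k \<le> int ((m + 1) div 2)
        then int k * int p - int k * (2 * (int m - int k) + 1) + int (Suc m choose 2) else int k * int p)"
      using assms(4) unfolding NN_def by auto
    have Cd: "2 * int (Suc m choose 2) = int m * (int m + 1)" by (rule choose_Suc2)
    show ?thesis
      using final_arith[OF m2 assms(3) refl Cd k1 _ Ndef assms(5), of "wt Y" "PP p X" "dd Y" "dd X"]
        assms(4) dec wX w0 dch dm unfolding Y_def by simp
  qed
  have mHP: "multiplicity p (HPs X) \<le> PP p X"
    using mult_HPs[OF assms(2) fX] key wX by (simp add: power2_eq_square)
  have fac: "F_nat lam * HPs X = fact n" using F_nat_beta[OF lam(2)] lam(3) unfolding X_def by simp
  have fn0: "(fact n :: nat) \<noteq> 0" by simp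
  have nz: "F_nat lam \<noteq> 0" "HPs X \<noteq> 0" using fac fn0 by (metis mult_zero_left, metis mult_zero_right)
  have "multiplicity p (fact n :: nat) = multiplicity p (F_nat lam) + multiplicity p (HPs X)"
    unfolding fac[symmetric] using assms(2) nz by (simp add: prime_elem_multiplicity_mult_distrib)
  then have "int (multiplicity p (fact n :: nat)) - (int k - 1) \<le> int (multiplicity p (F_nat lam))"
    using mHP key by linarith
  then show "ereal (real_of_int (int (multiplicity p (fact n :: nat)) - (int k - 1))) \<le> e"
    unfolding lam(1) by (simp del: of_int_diff)
qed


end
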